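(* Let $G$ be a finite graph with maximum degree $\Delta$, with edges ordered $e_1,\ldots,e_m$, let $\gamma>1$ be real, $K=\lceil(2+\gamma)(\Delta-1)\rceil$, and $t$ a positive integer. Let $F\in\{1,\ldots,\lceil\gamma(\Delta-1)\rceil\}^t$ be an input for which, when the Procedure described in the context is run, some edge is still uncolored after step $t$, and let $R=(R_1,\ldots,R_t)$ be the record produced. Let $R^\circ$ be the word over $\{0,1\}$ obtained by concatenating, for $i=1,\ldots,t$, the word $0$ if $R_i$ is empty and the word $0\,1^{2k-2}$ if $R_i=(k,\ell)$. Then $R^\circ$ is a partial Dyck word with $t$ letters $0$ and $t-r$ letters $1$, where $r$ is the number of colored edges after step $t$. Moreover, all descents in $R^\circ$ have even length, and if every cycle of $G$ has length at least $2\ell+1$ for some integer $\ell\ge 1$, then all descents in $R^\circ$ have length at least $\max(4,2\ell)$.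
   Context: Procedure. A partial edge-coloring assigns to some edges a color in $\{1,\ldots,K\}$; initially all edges are uncolored. Fix, for every edge $e$ and every $k\ge 3$, an enumeration (e.g. lexicographic) of the cycles of length $2k$ of $G$ containing $e$. At step $i=1,2,\ldots,t$: if no edge is uncolored, stop. Otherwise let $e_j=uv$ be the uncolored edge of smallest index. Let $S'$ be the set of colors appearing on edges $xy\neq uv$ such that (1) $x=u$ or $x=v$, or (2) edges $ux$ and $vy$ exist and have the same color; let $S=\{1,\ldots,K\}\setminus S'$. Color $e_j$ with the $F_i$-th smallest element of $S$. If this creates a cycle colored with only two colors (it has length $2k\ge 6$), choose one such cycle $C$ by a fixed deterministic rule, write it as $e_{i_1},e_{i_2},\ldots,e_{i_{2k}},e_{i_1}$ (consecutive edges) with $e_{i_1}=e_j$ and $i_2<i_{2k}$, uncolor all edges of $C$ except $e_{i_2}$ and $e_{i_3}$, and set $R_i=(k,\ell)$ where $\ell$ is the index of $C$ in the fixed enumeration of cycles of length $2k$ containing $e_j$. Otherwise $R_i$ is empty. A partial Dyck word is a word over $\{0,1\}$ in which every prefix contains at least as many $0$'s as $1$'s. A descent is a maximal block of consecutive $1$'s. *)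

theory Defs
  imports Complex_Main
begin

text \<open>A finite simple graph is given by its list of edges e_1,...,e_m (the order is the
  fixed edge order); each edge is a 2-element vertex set. Edges are referred to by
  their (0-based) index in the list.\<close>

type_synonym coloring = "nat \<Rightarrow> nat option"

definition simple_edge_list :: "'a set list \<Rightarrow> bool" where
  "simple_edge_list es \<longleftrightarrow> distinct es \<and> (\<forall>e\<in>set es. \<exists>x y. x \<noteq> y \<and> e = {x, y})"

definition max_degree :: "'a set list \<Rightarrow> nat" where
  "max_degree es = Max (insert 0 ((\<lambda>v. card {i. i < length es \<and> v \<in> es ! i}) ` (\<Union>(set es))))"

text \<open>A cycle of G, represented by its set of edge indices; its length is its cardinality.\<close>
definition is_cycle :: "'a set list \<Rightarrow> nat set \<Rightarrow> bool" where
  "is_cycle es C \<longleftrightarrow> (\<exists>vs. distinct vs \<and> length vs \<ge> 3 \<and>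
     (\<forall>p<length vs. {vs ! p, vs ! ((p + 1) mod length vs)} \<in> set es) \<and>
     C = {i. i < length es \<and> (\<exists>p<length vs. es ! i = {vs ! p, vs ! ((p + 1) mod length vs)})})"

definition forbidden_colors :: "'a set list \<Rightarrow> coloring \<Rightarrow> nat \<Rightarrow> nat set" where
  "forbidden_colors es col j = {c. \<exists>i<length es. i \<noteq> j \<and> col i = Some c \<and>
     (\<exists>x y. es ! i = {x, y} \<and>
        (x \<in> es ! j \<or>
         (\<exists>u v i1 i2. es ! j = {u, v} \<and> i1 < length es \<and> i2 < length es \<and>
            es ! i1 = {u, x} \<and> es ! i2 = {v, y} \<and> col i1 \<noteq> None \<and> col i1 = col i2)))}"

definition bichrom_cycles :: "'a set list \<Rightarrow> coloring \<Rightarrow> nat \<Rightarrow> nat set set" where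
  "bichrom_cycles es col j = {C. is_cycle es C \<and> j \<in> C \<and> (\<forall>i\<in>C. col i \<noteq> None) \<and>
     card ((\<lambda>i. the (col i)) ` C) \<le> 2}"

text \<open>One step of the Procedure (when some edge is uncoloured). rule is the fixed
  deterministic rule choosing the cycle; enum e k C is the index of C in the fixed
  enumeration of the cycles of length 2k containing e.\<close>
definition proc_step ::
  "'a set list \<Rightarrow> nat \<Rightarrow> (coloring \<Rightarrow> nat \<Rightarrow> nat set set \<Rightarrow> nat set) \<Rightarrow>
   (nat \<Rightarrow> nat \<Rightarrow> nat set \<Rightarrow> nat) \<Rightarrow> coloring \<Rightarrow> nat \<Rightarrow> coloring \<times> (nat \<times> nat) option" where
  "proc_step es K rule enum col f =
    (let j = (LEAST j. j < length es \<and> col j = None);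
         S = {1..K} - forbidden_colors es col j;
         c = sorted_list_of_set S ! (f - 1);
         col1 = col(j := Some c);
         B = bichrom_cycles es col1 j
     in if B = {} then (col1, None)
        else (let C = rule col1 j B;
                  k = card C div 2;
                  i2 = Min {i\<in>C. i \<noteq> j \<and> es ! i \<inter> es ! j \<noteq> {}};
                  i3 = Min {i\<in>C. i \<noteq> j \<and> i \<noteq> i2 \<and> es ! i \<inter> es ! i2 \<noteq> {}}
              in ((\<lambda>i. if i \<in> C \<and> i \<noteq> i2 \<and> i \<noteq> i3 then None else col1 i),
                  Some (k, enum j k C))))"

definition run_procedure ::
  "'a set list \<Rightarrow> nat \<Rightarrow> (coloring \<Rightarrow> nat \<Rightarrow> nat set set \<Rightarrow> nat set) \<Rightarrow>
   (nat \<Rightarrow> nat \<Rightarrow> nat set \<Rightarrow> nat) \<Rightarrow> nat list \<Rightarrow> coloring \<times> (nat \<times> nat) option list" where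
  "run_procedure es K rule enum F =
     foldl (\<lambda>(col, R) f.
              if (\<exists>j<length es. col j = None)
              then (case proc_step es K rule enum col f of (col', r) \<Rightarrow> (col', R @ [r]))
              else (col, R))
           (\<lambda>_. None, []) F"

definition record_word :: "(nat \<times> nat) option list \<Rightarrow> nat list" where
  "record_word R = concat (map (\<lambda>r. case r of None \<Rightarrow> [0] | Some (k, l) \<Rightarrow> 0 # replicate (2 * k - 2) 1) R)"

definition partial_dyck :: "nat list \<Rightarrow> bool" where
  "partial_dyck w \<longleftrightarrow> set w \<subseteq> {0, 1} \<and>
     (\<forall>n\<le>length w. count_list (take n w) 1 \<le> count_list (take n w) 0)"

definition is_descent :: "nat list \<Rightarrow> nat \<Rightarrow> nat \<Rightarrow> bool" where
  "is_descent w a b \<longleftrightarrow> a < b \<and> b \<le> length w \<and> (\<forall>i. a \<le> i \<and> i < b \<longrightarrow> w ! i = 1) \<and>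
     (a = 0 \<or> w ! (a - 1) \<noteq> 1) \<and> (b = length w \<or> w ! b \<noteq> 1)"

end

theory Submission
  imports Defs
begin

definition wordn :: "nat list \<Rightarrow> nat list" where
  "wordn ns = concat (map (\<lambda>n. 0 # replicate n (1::nat)) ns)"

lemma wordn_Nil[simp]: "wordn [] = []" by (simp add: wordn_def)
lemma wordn_Cons[simp]: "wordn (n # ns) = 0 # replicate n 1 @ wordn ns" by (simp add: wordn_def)
lemma wordn_append[simp]: "wordn (xs @ ys) = wordn xs @ wordn ys" by (simp add: wordn_def)

lemma count_rep1[simp]: "count_list (replicate n (Suc 0)) (Suc 0) = n" by (induction n) auto
lemma count_rep0[simp]: "count_list (replicate n (Suc 0)) 0 = 0" by (induction n) auto

lemma wordn_count0: "count_list (wordn ns) 0 = length ns"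
  by (induction ns) (auto simp: count_rep0)
lemma wordn_count1: "count_list (wordn ns) (Suc 0) = sum_list ns"
  by (induction ns) (auto simp: count_rep1)
lemma wordn_set: "set (wordn ns) \<subseteq> {0,1}"
  by (induction ns) auto

lemma wordn_dyck:
  assumes "\<forall>q\<le>length ns. sum_list (take q ns) \<le> q"
  shows "\<forall>k\<le>length (wordn ns). count_list (take k (wordn ns)) 1 \<le> count_list (take k (wordn ns)) 0"
  using assms
proof (induction ns rule: rev_induct)
  case Nil
  then show ?case by simp
next
  case (snoc n ns)
  have h: "\<forall>q\<le>length ns. sum_list (take q ns) \<le> q"
  proof (intro allI impI)
    fix q assume "q \<le> length ns"
    then show "sum_list (take q ns) \<le> q" using snoc.prems[rule_format, of q] by simp
  qed
  have tot: "sum_list ns + n \<le> length ns + 1"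
    using snoc.prems[rule_format, of "length ns + 1"] by simp
  show ?case
  proof (intro allI impI)
    fix k assume k: "k \<le> length (wordn (ns @ [n]))"
    show "count_list (take k (wordn (ns @ [n]))) 1 \<le> count_list (take k (wordn (ns @ [n]))) 0"
    proof (cases "k \<le> length (wordn ns)")
      case True
      then show ?thesis using snoc.IH[OF h] by simp
    next
      case False
      then obtain s where s: "k = length (wordn ns) + Suc s" by (metis add_Suc_right less_imp_Suc_add not_le)
      have "take k (wordn (ns @ [n])) = wordn ns @ 0 # replicate (min s n) 1"
        using s by (simp add: take_replicate)
      then show ?thesis using tot by (simp add: wordn_count0 wordn_count1 count_rep0 count_rep1)
    qed
  qed
qed

lemma wordn_nth:
  "(0 # replicate n 1 @ w) ! i = (if i = 0 then 0 else if i \<le> n then 1 else w ! (i - Suc n))"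
  by (cases i) (auto simp: nth_append)

lemma wordn_hd: "wordn ns \<noteq> [] \<Longrightarrow> wordn ns ! 0 = 0"
  by (cases ns) auto

lemma wordn_descent:
  "is_descent (wordn ns) a b \<Longrightarrow> b - a \<in> set ns"
proof (induction ns arbitrary: a b)
  case Nil
  then show ?case by (auto simp: is_descent_def)
next
  case (Cons n ns)
  let ?w = "wordn ns"
  have D: "a < b" "b \<le> Suc (n + length ?w)" "\<forall>i. a \<le> i \<and> i < b \<longrightarrow> (0 # replicate n 1 @ ?w) ! i = 1"
     "a = 0 \<or> (0 # replicate n 1 @ ?w) ! (a - 1) \<noteq> 1"
     "b = Suc (n + length ?w) \<or> (0 # replicate n 1 @ ?w) ! b \<noteq> 1"
    using Cons.prems by (auto simp: is_descent_def)
  show ?case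
  proof (cases "a \<ge> Suc n")
    case True
    have "is_descent ?w (a - Suc n) (b - Suc n)"
      unfolding is_descent_def
    proof (intro conjI allI impI)
      show "a - Suc n < b - Suc n" using D True by simp
      show "b - Suc n \<le> length ?w" using D by simp
      fix i assume "a - Suc n \<le> i \<and> i < b - Suc n"
      then have "a \<le> i + Suc n \<and> i + Suc n < b" using True by linarith
      then have "(0 # replicate n 1 @ ?w) ! (i + Suc n) = 1" using D(3) by blast
      then show "?w ! i = 1" by (subst (asm) wordn_nth) simp
    next
      show "a - Suc n = 0 \<or> ?w ! (a - Suc n - 1) \<noteq> 1"
      proof (cases "a = Suc n")
        case False
        then have "(0 # replicate n 1 @ ?w) ! (a - 1) \<noteq> 1" using D(4) True by auto
        moreover have "(0 # replicate n 1 @ ?w) ! (a - 1) = ?w ! (a - Suc n - 1)"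
          using False True by (subst wordn_nth) auto
        ultimately show ?thesis by simp
      qed simp
      show "b - Suc n = length ?w \<or> ?w ! (b - Suc n) \<noteq> 1"
      proof (cases "b = Suc (n + length ?w)")
        case False
        then have "(0 # replicate n 1 @ ?w) ! b \<noteq> 1" using D(5) by auto
        moreover have "(0 # replicate n 1 @ ?w) ! b = ?w ! (b - Suc n)"
          using True D(1) by (subst wordn_nth) auto
        ultimately show ?thesis by simp
      qed simp
    qed
    then have "b - Suc n - (a - Suc n) \<in> set ns" using Cons.IH by blast
    moreover have "b - Suc n - (a - Suc n) = b - a" using True D(1) by simp
    ultimately show ?thesis by simp
  next
    case False
    have a0: "a \<noteq> 0"
    proof
      assume "a = 0"
      then have "(0 # replicate n 1 @ ?w) ! 0 = 1" using D(3) D(1) by blast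
      then show False by simp
    qed
    have a1: "a = 1"
    proof (rule ccontr)
      assume "a \<noteq> 1"
      then have "(0 # replicate n 1 @ ?w) ! (a - 1) = 1" using a0 False by (subst wordn_nth) auto
      then show False using D(4) a0 by simp
    qed
    have b1: "b \<ge> Suc n"
    proof (rule ccontr)
      assume "\<not> b \<ge> Suc n"
      then have "(0 # replicate n 1 @ ?w) ! b = 1" using a1 D(1) by (subst wordn_nth) auto
      then show False using D(5) \<open>\<not> b \<ge> Suc n\<close> by auto
    qed
    have b2: "b = Suc n"
    proof (rule ccontr)
      assume "b \<noteq> Suc n"
      then have "b > Suc n" using b1 by simp
      then have ne: "?w \<noteq> []" using D(2) by auto
      have "(0 # replicate n 1 @ ?w) ! (Suc n) = 1" using D(3)[rule_format, of "Suc n"] a1 \<open>b > Suc n\<close> by simp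
      then show False using wordn_hd[OF ne] by (simp add: nth_append)
    qed
    show ?thesis using a1 b2 by simp
  qed
qed

definition proper :: "'a set list \<Rightarrow> coloring \<Rightarrow> bool" where
  "proper es col \<longleftrightarrow> (\<forall>i1 i2. i1 < length es \<longrightarrow> i2 < length es \<longrightarrow> i1 \<noteq> i2 \<longrightarrow>
      es ! i1 \<inter> es ! i2 \<noteq> {} \<longrightarrow> col i1 \<noteq> None \<longrightarrow> col i1 \<noteq> col i2)"

lemma edge_uniq:
  assumes "proper es col" "e1 < length es" "e2 < length es" "w \<in> es ! e1" "w \<in> es ! e2"
    "col e1 = Some d" "col e2 = Some d"
  shows "e1 = e2"
proof (rule ccontr)
  assume ne: "e1 \<noteq> e2"
  have "es ! e1 \<inter> es ! e2 \<noteq> {}" using assms(4,5) by blast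
  then have "col e1 \<noteq> col e2" using assms(1)[unfolded proper_def, rule_format, OF assms(2,3) ne] assms(6) by simp
  then show False using assms(6,7) by simp
qed

lemma simple_edge_set:
  assumes "simple_edge_list es" "e \<in> set es"
  shows "\<exists>x y. x \<noteq> y \<and> e = {x, y}"
proof -
  from assms(1) have "\<forall>e\<in>set es. \<exists>x y. x \<noteq> y \<and> e = {x, y}"
    unfolding simple_edge_list_def by (rule conjunct2)
  then show ?thesis using assms(2) by (rule bspec)
qed
lemma simple_edge:
  assumes "simple_edge_list es" "i < length es"
  shows "\<exists>x y. x \<noteq> y \<and> es ! i = {x, y}"
  using simple_edge_set[OF assms(1) nth_mem[OF assms(2)]] .
lemma simple_idx:
  assumes "simple_edge_list es" "i < length es" "i' < length es" "es ! i = es ! i'"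
  shows "i = i'"
proof -
  from assms(1) have "distinct es" unfolding simple_edge_list_def by (rule conjunct1)
  then show ?thesis using assms(2-4) by (simp add: nth_eq_iff_index_eq)
qed
lemma deg_bound:
  assumes "simple_edge_list es" "j < length es" "w \<in> es ! j"
  shows "card {i. i < length es \<and> w \<in> es ! i} \<le> max_degree es"
proof -
  have fe: "finite e" if e: "e \<in> set es" for e
  proof -
    obtain x y where "e = {x, y}" using simple_edge_set[OF assms(1) e] by blast
    then show ?thesis by simp
  qed
  have fin: "finite (\<Union>(set es))" by (rule finite_Union[OF finite_set fe])
  have "w \<in> \<Union>(set es)" using nth_mem[OF assms(2)] assms(3) by blast
  then have "card {i. i < length es \<and> w \<in> es ! i} \<in> insert 0 ((\<lambda>v. card {i. i < length es \<and> v \<in> es ! i}) ` (\<Union>(set es)))"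
    by (intro insertI2 imageI)
  moreover have "finite (insert 0 ((\<lambda>v. card {i. i < length es \<and> v \<in> es ! i}) ` (\<Union>(set es))))"
    using fin by simp
  ultimately show ?thesis unfolding max_degree_def by (rule Max_ge[rotated])
qed

lemma Aw_bound:
  assumes "simple_edge_list es" "j < length es" "w \<in> es ! j"
  shows "card ((\<lambda>i. the (col i)) ` {i. i < length es \<and> i \<noteq> j \<and> w \<in> es ! i \<and> col i \<noteq> None})
          \<le> max_degree es - 1"
proof -
  let ?A = "{i. i < length es \<and> w \<in> es ! i}"
  have "card ((\<lambda>i. the (col i)) ` {i. i < length es \<and> i \<noteq> j \<and> w \<in> es ! i \<and> col i \<noteq> None})
      \<le> card {i. i < length es \<and> i \<noteq> j \<and> w \<in> es ! i \<and> col i \<noteq> None}" by (rule card_image_le) simp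
  also have "\<dots> \<le> card (?A - {j})" by (rule card_mono) auto
  also have "\<dots> = card ?A - 1" using assms by (subst card_Diff_singleton) auto
  also have "\<dots> \<le> max_degree es - 1" using deg_bound[OF assms] by simp
  finally show ?thesis .
qed

lemma forb_bound:
  assumes simple: "simple_edge_list es" and pr: "proper es col" and j: "j < length es"
    and cj: "col j = None"
  shows "finite (forbidden_colors es col j) \<and> card (forbidden_colors es col j) \<le> 2 * (max_degree es - 1)"
proof -
  let ?m = "length es"
  let ?S = "forbidden_colors es col j"
  obtain u v where uv: "u \<noteq> v" "es ! j = {u, v}" using simple_edge[OF simple j] by blast
  define Aw where "Aw w = (\<lambda>i. the (col i)) ` {i. i < ?m \<and> i \<noteq> j \<and> w \<in> es ! i \<and> col i \<noteq> None}" for w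
  have finA: "finite (Aw w)" for w unfolding Aw_def by simp
  have cAu: "card (Aw u) \<le> max_degree es - 1" unfolding Aw_def by (rule Aw_bound[OF simple j]) (simp add: uv)
  have cAv: "card (Aw v) \<le> max_degree es - 1" unfolding Aw_def by (rule Aw_bound[OF simple j]) (simp add: uv)
  have finS: "finite ?S"
  proof (rule finite_subset)
    show "?S \<subseteq> (\<lambda>i. the (col i)) ` {..<?m}"
    proof
      fix c assume "c \<in> ?S"
      then obtain i where "i < ?m" "col i = Some c" unfolding forbidden_colors_def by blast
      then show "c \<in> (\<lambda>i. the (col i)) ` {..<?m}" by (intro image_eqI[where x=i]) auto
    qed
  qed simp
  define X where "X = ?S - (Aw u \<union> Aw v)"
  define P where "P c d \<longleftrightarrow> (\<exists>i x y u' v' i1 i2. i < ?m \<and> col i = Some c \<and> es ! i = {x, y} \<and>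
      ((u' = u \<and> v' = v) \<or> (u' = v \<and> v' = u)) \<and> i1 < ?m \<and> i2 < ?m \<and> es ! i1 = {u', x} \<and> es ! i2 = {v', y} \<and>
      col i1 = Some d \<and> col i2 = Some d)" for c d
  have claim1: "\<exists>d. d \<in> Aw u \<inter> Aw v \<and> P c d" if cX: "c \<in> X" for c
  proof -
    from cX have cS: "c \<in> ?S" and cn: "c \<notin> Aw u" "c \<notin> Aw v" unfolding X_def by auto
    from cS obtain i x y where i: "i < ?m" "i \<noteq> j" "col i = Some c" "es ! i = {x, y}"
      and alt: "x \<in> es ! j \<or> (\<exists>u' v' i1 i2. es ! j = {u', v'} \<and> i1 < ?m \<and> i2 < ?m \<and>
            es ! i1 = {u', x} \<and> es ! i2 = {v', y} \<and> col i1 \<noteq> None \<and> col i1 = col i2)"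
      unfolding forbidden_colors_def mem_Collect_eq by (elim exE conjE) (rule that; assumption)
    have "x \<notin> es ! j"
    proof
      assume "x \<in> es ! j"
      then have "c \<in> Aw x" unfolding Aw_def using i by (auto intro!: image_eqI[where x=i])
      then show False using cn \<open>x \<in> es ! j\<close> uv by auto
    qed
    with alt obtain u' v' i1 i2 where w: "es ! j = {u', v'}" "i1 < ?m" "i2 < ?m"
       "es ! i1 = {u', x}" "es ! i2 = {v', y}" "col i1 \<noteq> None" "col i1 = col i2" by blast
    obtain d where d: "col i1 = Some d" using w(6) by auto
    have ij: "i1 \<noteq> j" "i2 \<noteq> j" using d w(7) cj by auto
    have uv': "(u' = u \<and> v' = v) \<or> (u' = v \<and> v' = u)" using w(1) uv by (auto simp: doubleton_eq_iff)
    have "d \<in> Aw u'" unfolding Aw_def using w d ij by (auto intro!: image_eqI[where x=i1])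
    moreover have "d \<in> Aw v'" unfolding Aw_def using w d ij by (auto intro!: image_eqI[where x=i2])
    ultimately have "d \<in> Aw u \<inter> Aw v" using uv' by auto
    moreover have "P c d" unfolding P_def
      apply (rule exI[where x=i], rule exI[where x=x], rule exI[where x=y], rule exI[where x=u'],
          rule exI[where x=v'], rule exI[where x=i1], rule exI[where x=i2])
      using i w d uv' by simp
    ultimately show ?thesis by blast
  qed
  have other: "x = x'" if "{w, x} = {w, x'}" "x \<noteq> w" "x' \<noteq> w" for w x x' :: 'a
    using that by (auto simp: doubleton_eq_iff)
  have ne: "x \<noteq> w" if "k < ?m" "es ! k = {w, x}" for k w x
    using simple_edge[OF simple that(1)] that(2) by (auto simp: doubleton_eq_iff)
  have claim2: "c = c'" if "P c d" "P c' d" for c c' d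
  proof -
    from that(1) obtain i x y u' v' i1 i2 where A: "i < ?m" "col i = Some c" "es ! i = {x, y}"
      "(u' = u \<and> v' = v) \<or> (u' = v \<and> v' = u)" "i1 < ?m" "i2 < ?m" "es ! i1 = {u', x}" "es ! i2 = {v', y}"
      "col i1 = Some d" "col i2 = Some d" unfolding P_def by (elim exE conjE) (rule that; assumption)
    from that(2) obtain i' x' y' u'' v'' i1' i2' where B: "i' < ?m" "col i' = Some c'" "es ! i' = {x', y'}"
      "(u'' = u \<and> v'' = v) \<or> (u'' = v \<and> v'' = u)" "i1' < ?m" "i2' < ?m" "es ! i1' = {u'', x'}" "es ! i2' = {v'', y'}"
      "col i1' = Some d" "col i2' = Some d" unfolding P_def by (elim exE conjE) (rule that; assumption)
    have nA: "x \<noteq> u'" "y \<noteq> v'" using ne A by auto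
    have nB: "x' \<noteq> u''" "y' \<noteq> v''" using ne B by auto
    have "es ! i' = es ! i"
    proof (cases "u'' = u'")
      case True
      then have v: "v'' = v'" using A(4) B(4) uv(1) by blast
      have "i1' = i1" using edge_uniq[OF pr B(5) A(5), of u'' d] A(7) B(7) A(9) B(9) True by simp
      then have "{u', x'} = {u', x}" using A(7) B(7) True by metis
      then have "x' = x" using other[of u' x' x] nA(1) nB(1) True by metis
      have "i2' = i2" using edge_uniq[OF pr B(6) A(6), of v'' d] A(8) B(8) A(10) B(10) v by simp
      then have "{v', y'} = {v', y}" using A(8) B(8) v by metis
      then have "y' = y" using other[of v' y' y] nA(2) nB(2) v by metis
      show ?thesis using A(3) B(3) \<open>x' = x\<close> \<open>y' = y\<close> by simp
    next
      case False
      then have v: "u'' = v'" "v'' = u'" using A(4) B(4) uv(1) by auto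
      have "i1' = i2" using edge_uniq[OF pr B(5) A(6), of u'' d] A(8) B(7) A(10) B(9) v by simp
      then have "{v', x'} = {v', y}" using A(8) B(7) v by metis
      then have "x' = y" using other[of v' x' y] nA(2) nB(1) v by metis
      have "i2' = i1" using edge_uniq[OF pr B(6) A(5), of v'' d] A(7) B(8) A(9) B(10) v by simp
      then have "{u', y'} = {u', x}" using A(7) B(8) v by metis
      then have "y' = x" using other[of u' y' x] nA(1) nB(2) v by metis
      show ?thesis using A(3) B(3) \<open>x' = y\<close> \<open>y' = x\<close> by (simp add: insert_commute)
    qed
    then have "i' = i" using simple_idx[OF simple B(1) A(1)] by simp
    then show ?thesis using A(2) B(2) by simp
  qed
  define \<phi> where "\<phi> c = (SOME d. d \<in> Aw u \<inter> Aw v \<and> P c d)" for c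
  have \<phi>: "\<phi> c \<in> Aw u \<inter> Aw v \<and> P c (\<phi> c)" if "c \<in> X" for c
    unfolding \<phi>_def using someI_ex[OF claim1[OF that]] .
  have "inj_on \<phi> X"
    by (rule inj_onI) (metis \<phi> claim2)
  then have cX: "card X \<le> card (Aw u \<inter> Aw v)"
    by (rule card_inj_on_le) (use \<phi> finA in auto)
  have "card ?S \<le> card ((Aw u \<union> Aw v) \<union> X)"
    by (rule card_mono) (auto simp: X_def finA finS)
  also have "\<dots> \<le> card (Aw u \<union> Aw v) + card X" by (rule card_Un_le)
  also have "\<dots> \<le> card (Aw u \<union> Aw v) + card (Aw u \<inter> Aw v)" using cX by simp
  also have "\<dots> = card (Aw u) + card (Aw v)" using card_Un_Int[OF finA finA] by simp
  also have "\<dots> \<le> 2 * (max_degree es - 1)" using cAu cAv by simp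
  finally show ?thesis using finS by simp
qed

lemma modoff:
  fixes n q a b :: nat
  assumes "a < n" "b < n" "(q + a) mod n = (q + b) mod n"
  shows "a = b"
proof (rule ccontr)
  assume ne: "a \<noteq> b"
  { fix a b :: nat assume ab: "a < b" "b < n" "(q + a) mod n = (q + b) mod n"
    then have "n dvd (q + b) - (q + a)" using mod_eq_dvd_iff_nat[of "q + a" "q + b" n] by simp
    then have "n dvd b - a" by simp
    moreover have "0 < b - a" "b - a < n" using ab by auto
    ultimately have False using nat_dvd_not_less by blast }
  note * = this
  show False
  proof (cases "a < b")
    case True then show ?thesis using *[of a b] assms by blast
  next
    case False then have "b < a" using ne by simp
    then show ?thesis using *[of b a] assms by simp
  qed
qed

lemma cycle_struct:
  assumes simple: "simple_edge_list es" and cyc: "is_cycle es C"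
  shows "\<exists>(n::nat) (V::nat \<Rightarrow> 'a). n \<ge> 3 \<and> (\<forall>q q'. V q = V q' \<longleftrightarrow> q mod n = q' mod n) \<and>
     (\<forall>q. {V q, V (q + 1)} \<in> set es) \<and>
     C = {i. i < length es \<and> (\<exists>q. es ! i = {V q, V (q + 1)})}"
proof -
  obtain vs where vs: "distinct vs" "length vs \<ge> 3"
    "\<forall>p<length vs. {vs ! p, vs ! ((p + 1) mod length vs)} \<in> set es"
    "C = {i. i < length es \<and> (\<exists>p<length vs. es ! i = {vs ! p, vs ! ((p + 1) mod length vs)})}"
    using cyc unfolding is_cycle_def by blast
  define n where "n = length vs"
  define V where "V q = vs ! (q mod n)" for q
  have n3: "n \<ge> 3" using vs(2) n_def by simp
  have Vinj: "V q = V q' \<longleftrightarrow> q mod n = q' mod n" for q q'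
  proof -
    have "q mod n < length vs" "q' mod n < length vs" using n3 n_def by (auto intro!: mod_less_divisor)
    then show ?thesis unfolding V_def using vs(1) nth_eq_iff_index_eq by blast
  qed
  have Vs: "V (q + 1) = vs ! ((q mod n + 1) mod n)" for q
    unfolding V_def by (simp add: mod_Suc_eq)
  have E: "{V q, V (q + 1)} \<in> set es" for q
  proof -
    have "q mod n < n" using n3 by simp
    then show ?thesis using vs(3) Vs[of q] unfolding V_def n_def by simp
  qed
  have "C = {i. i < length es \<and> (\<exists>q. es ! i = {V q, V (q + 1)})}"
  proof -
    have "(\<exists>p<n. es ! i = {vs ! p, vs ! ((p + 1) mod n)}) \<longleftrightarrow> (\<exists>q. es ! i = {V q, V (q + 1)})" for i
    proof
      assume "\<exists>p<n. es ! i = {vs ! p, vs ! ((p + 1) mod n)}"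
      then obtain p where "p < n" "es ! i = {vs ! p, vs ! ((p + 1) mod n)}" by blast
      then have "es ! i = {V p, V (p + 1)}" unfolding V_def by simp
      then show "\<exists>q. es ! i = {V q, V (q + 1)}" by blast
    next
      assume "\<exists>q. es ! i = {V q, V (q + 1)}"
      then obtain q where q: "es ! i = {V q, V (q + 1)}" by blast
      have "q mod n < n" using n3 by simp
      moreover have "es ! i = {vs ! (q mod n), vs ! ((q mod n + 1) mod n)}" using q Vs[of q] unfolding V_def by simp
      ultimately show "\<exists>p<n. es ! i = {vs ! p, vs ! ((p + 1) mod n)}" by blast
    qed
    then show ?thesis using vs(4) n_def by simp
  qed
  then show ?thesis using n3 Vinj E by blast
qed


lemma mod_add_cong_nat: "(a::nat) mod n = b mod n \<Longrightarrow> (a + k) mod n = (b + k) mod n"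
  by (metis mod_add_left_eq)

lemma cycle_props:
  assumes simple: "simple_edge_list es" and pr: "proper es col1"
    and CB: "C \<in> bichrom_cycles es col1 j" and cj: "col1 j = Some c"
    and nf: "c \<notin> forbidden_colors es col j" and same: "\<forall>i. i \<noteq> j \<longrightarrow> col1 i = col i"
  shows "is_cycle es C \<and> finite C \<and> C \<subseteq> {..<length es} \<and> even (card C) \<and> 6 \<le> card C \<and> j \<in> C \<and>
     (\<forall>i\<in>C. col1 i \<noteq> None) \<and>
     (\<exists>i\<in>C. i \<noteq> j \<and> es ! i \<inter> es ! j \<noteq> {}) \<and>
     (\<forall>i2\<in>C. \<exists>i\<in>C. i \<noteq> j \<and> i \<noteq> i2 \<and> es ! i \<inter> es ! i2 \<noteq> {})"
proof -
  let ?m = "length es"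
  from CB have cyc: "is_cycle es C" and jC: "j \<in> C" and allc: "\<forall>i\<in>C. col1 i \<noteq> None"
    and two: "card ((\<lambda>i. the (col1 i)) ` C) \<le> 2" unfolding bichrom_cycles_def by auto
  obtain n :: nat and V :: "nat \<Rightarrow> 'a" where n3: "n \<ge> 3" and Vinj: "\<And>q q'. V q = V q' \<longleftrightarrow> q mod n = q' mod n"
    and E: "\<And>q. {V q, V (q + 1)} \<in> set es" and Cdef: "C = {i. i < ?m \<and> (\<exists>q. es ! i = {V q, V (q + 1)})}"
    using cycle_struct[OF simple cyc] by blast
  define Ed where "Ed q = {V q, V (q + 1)}" for q
  define idx where "idx q = (SOME i. i < ?m \<and> es ! i = Ed q)" for q
  have idx: "idx q < ?m \<and> es ! idx q = Ed q" for q
  proof -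
    have "\<exists>i. i < ?m \<and> es ! i = Ed q" using E[of q, unfolded in_set_conv_nth] unfolding Ed_def .
    then show ?thesis unfolding idx_def by (rule someI_ex)
  qed
  have idxC: "idx q \<in> C" for q
  proof -
    have "es ! idx q = {V q, V (q + 1)}" using idx[of q] unfolding Ed_def by simp
    then have "\<exists>q'. es ! idx q = {V q', V (q' + 1)}" by (rule exI)
    then show ?thesis using idx[of q] Cdef by simp
  qed
  have Cidx: "\<exists>q. i = idx q" if "i \<in> C" for i
  proof -
    from that obtain q where q: "i < ?m" "es ! i = Ed q" unfolding Cdef Ed_def by blast
    have "i = idx q" using simple_idx[OF simple q(1)] idx[of q] q(2) by simp
    then show ?thesis by blast
  qed
  have VS: "V (q + k) = V (q' + k)" if "q mod n = q' mod n" for q q' k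
    using Vinj mod_add_cong_nat[OF that] by blast
  have Ed_eq: "q mod n = q' mod n" if "Ed q = Ed q'" for q q'
  proof -
    from that have "(V q = V q' \<and> V (q + 1) = V (q' + 1)) \<or> (V q = V (q' + 1) \<and> V (q + 1) = V q')"
      unfolding Ed_def doubleton_eq_iff .
    then show ?thesis
    proof
      assume "V q = V q' \<and> V (q + 1) = V (q' + 1)"
      then show ?thesis using Vinj by blast
    next
      assume h: "V q = V (q' + 1) \<and> V (q + 1) = V q'"
      then have "q mod n = (q' + 1) mod n" "(q + 1) mod n = q' mod n" using Vinj by blast+
      then have "(q' + 1 + 1) mod n = (q + 1) mod n" using mod_add_cong_nat by metis
      then have "(q' + 2) mod n = (q' + 0) mod n" using \<open>(q + 1) mod n = q' mod n\<close> by simp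
      then have "(2::nat) = 0" using modoff[of 2 n 0 q'] n3 by simp
      then show ?thesis by simp
    qed
  qed
  have idx_eq: "q mod n = q' mod n" if "idx q = idx q'" for q q'
    using Ed_eq idx[of q] idx[of q'] that by metis
  have idx_mod: "idx q = idx q'" if "q mod n = q' mod n" for q q'
  proof -
    have "Ed q = Ed q'" unfolding Ed_def using VS[OF that, of 0] VS[OF that, of 1] by simp
    then show ?thesis unfolding idx_def by simp
  qed
  have offne: "idx (q + a) \<noteq> idx (q + b)" if "a < n" "b < n" "a \<noteq> b" for q a b
    using idx_eq modoff that by blast
  have adj: "es ! idx q \<inter> es ! idx (q + 1) \<noteq> {}" for q
    using idx[of q] idx[of "q + 1"] unfolding Ed_def by auto
  have adjne: "idx q \<noteq> idx (q + 1)" for q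
    using offne[of 0 1 q] n3 by simp
  have Cim: "C = idx ` {..<n}"
  proof
    show "C \<subseteq> idx ` {..<n}"
    proof
      fix i assume "i \<in> C"
      then obtain q where "i = idx q" using Cidx by blast
      moreover have "idx q = idx (q mod n)" by (rule idx_mod) simp
      moreover have "q mod n < n" using n3 by simp
      ultimately show "i \<in> idx ` {..<n}" by blast
    qed
    show "idx ` {..<n} \<subseteq> C" using idxC by blast
  qed
  have inj: "inj_on idx {..<n}"
  proof (rule inj_onI)
    fix q q' assume "q \<in> {..<n}" "q' \<in> {..<n}" "idx q = idx q'"
    then show "q = q'" using idx_eq by fastforce
  qed
  have cardC: "card C = n" using Cim card_image[OF inj] by simp
  have finC: "finite C" using Cim by simp
  have Csub: "C \<subseteq> {..<?m}" using Cdef by auto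
  define A where "A = the (col1 (idx 0))"
  define B where "B = the (col1 (idx 1))"
  have Some: "col1 (idx q) = Some (the (col1 (idx q)))" for q using allc idxC by auto
  have diffc: "the (col1 (idx q)) \<noteq> the (col1 (idx (q + 1)))" for q
  proof
    assume h: "the (col1 (idx q)) = the (col1 (idx (q + 1)))"
    have "col1 (idx q) \<noteq> col1 (idx (q + 1))"
      using pr[unfolded proper_def, rule_format, OF conjunct1[OF idx[of q]] conjunct1[OF idx[of "q+1"]] adjne adj]
        Some[of q] by (metis option.distinct(1))
    then show False using h Some[of q] Some[of "q + 1"] by metis
  qed
  have AB: "A \<noteq> B" using diffc[of 0] unfolding A_def B_def by simp
  have inAB: "the (col1 (idx q)) \<in> {A, B}" for q
  proof (rule ccontr)
    assume nin: "the (col1 (idx q)) \<notin> {A, B}"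
    have "{A, B, the (col1 (idx q))} \<subseteq> (\<lambda>i. the (col1 i)) ` C"
      unfolding A_def B_def using idxC by blast
    then have "card {A, B, the (col1 (idx q))} \<le> card ((\<lambda>i. the (col1 i)) ` C)"
      using finC by (intro card_mono) auto
    moreover have "card {A, B, the (col1 (idx q))} = 3" using AB nin by simp
    ultimately show False using two by simp
  qed
  have alt: "the (col1 (idx q)) = (if even q then A else B)" for q
  proof (induction q)
    case 0
    then show ?case unfolding A_def by simp
  next
    case (Suc q)
    have "the (col1 (idx (Suc q))) \<noteq> the (col1 (idx q))" using diffc[of q] by simp
    moreover have "the (col1 (idx (Suc q))) \<in> {A, B}" using inAB by blast
    ultimately show ?case using Suc.IH AB by auto
  qed
  have evn: "even n"
  proof (rule ccontr)
    assume "odd n"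
    have "idx n = idx 0" by (rule idx_mod) simp
    then have "the (col1 (idx n)) = A" unfolding A_def by simp
    moreover have "the (col1 (idx n)) = B" using alt[of n] \<open>odd n\<close> by simp
    ultimately show False using AB by simp
  qed
  obtain p where jp: "j = idx p" using Cidx[OF jC] by blast
  have not4: "n \<noteq> 4"
  proof
    assume n4: "n = 4"
    define u where "u = V p"
    define v where "v = V (p + 1)"
    define y where "y = V (p + 2)"
    define x where "x = V (p + 3)"
    have ne: "idx (p + k) \<noteq> j" if "0 < k" "k < 4" for k
      using offne[of k 0 p] that n4 jp by simp
    have cs: "col1 (idx (p + k)) = col (idx (p + k))" if "0 < k" "k < 4" for k
      using same ne[OF that] by simp
    have c13: "col (idx (p + 3)) = col (idx (p + 1))"
    proof -
      have "the (col1 (idx (p + 3))) = the (col1 (idx (p + 1)))" using alt[of "p + 3"] alt[of "p + 1"] by simp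
      then have "col1 (idx (p + 3)) = col1 (idx (p + 1))" using Some[of "p + 3"] Some[of "p + 1"] by metis
      then show ?thesis using cs[of 3] cs[of 1] by simp
    qed
    have c2: "col (idx (p + 2)) = Some c"
    proof -
      have "the (col1 (idx (p + 2))) = the (col1 (idx p))" using alt[of "p + 2"] alt[of p] by simp
      then have "col1 (idx (p + 2)) = col1 (idx p)" using Some[of "p + 2"] Some[of p] by metis
      then show ?thesis using cs[of 2] cj jp by simp
    qed
    have c3: "col (idx (p + 3)) \<noteq> None"
    proof -
      have "col1 (idx (p + 3)) = col (idx (p + 3))" using cs[of 3] by simp
      then show ?thesis using Some[of "p + 3"] by (metis option.distinct(1))
    qed
    have V4: "V (p + 3 + 1) = u" unfolding u_def using Vinj n4 by simp
    have ej: "es ! j = {u, v}" using idx[of p] jp unfolding Ed_def u_def v_def by simp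
    have Ek: "es ! idx k = {V k, V (k + 1)}" for k using idx[of k] unfolding Ed_def by blast
    have e1: "es ! idx (p + 3) = {u, x}" using Ek[of "p + 3"] V4 unfolding x_def by (simp only: insert_commute)
    have s12: "p + 1 + 1 = p + 2" by simp
    have e2: "es ! idx (p + 1) = {v, y}" using Ek[of "p + 1"] unfolding v_def y_def s12 .
    have s23: "p + 2 + 1 = p + 3" by simp
    have e0: "es ! idx (p + 2) = {x, y}" using Ek[of "p + 2"] unfolding x_def y_def s23 by (simp only: insert_commute)
    have "c \<in> forbidden_colors es col j"
      unfolding forbidden_colors_def mem_Collect_eq
      apply (rule exI[where x="idx (p + 2)"])
      apply (intro conjI)
         apply (rule conjunct1[OF idx])
        apply (rule ne; simp)
       apply (rule c2)
      apply (rule exI[where x=x], rule exI[where x=y], intro conjI, rule e0, rule disjI2)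
      apply (rule exI[where x=u], rule exI[where x=v], rule exI[where x="idx (p + 3)"], rule exI[where x="idx (p + 1)"])
      using ej e1 e2 c13 c3 idx[of "p + 3"] idx[of "p + 1"] by simp
    then show False using nf by simp
  qed
  have six: "6 \<le> card C" using cardC evn n3 not4 by presburger
  have ex2: "\<exists>i\<in>C. i \<noteq> j \<and> es ! i \<inter> es ! j \<noteq> {}"
  proof (intro bexI conjI)
    show "idx (p + 1) \<in> C" by (rule idxC)
    show "idx (p + 1) \<noteq> j" using adjne jp by metis
    show "es ! idx (p + 1) \<inter> es ! j \<noteq> {}" using adj[of p] jp by blast
  qed
  have ex3: "\<exists>i\<in>C. i \<noteq> j \<and> i \<noteq> i2 \<and> es ! i \<inter> es ! i2 \<noteq> {}" if i2C: "i2 \<in> C" for i2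
  proof -
    obtain q where q: "i2 = idx q" using Cidx[OF i2C] by blast
    let ?a = "idx (q + 1)" and ?b = "idx (q + (n - 1))"
    have a1: "?a \<noteq> i2" using offne[of 1 0 q] n3 q by simp
    have b1: "?b \<noteq> i2" using offne[of "n - 1" 0 q] n3 q by simp
    have ab: "?a \<noteq> ?b" using offne[of 1 "n - 1" q] n3 by simp
    have ai: "es ! ?a \<inter> es ! i2 \<noteq> {}" using adj[of q] q by blast
    have Vb: "V (q + (n - 1) + 1) = V q" using Vinj n3 by simp
    have bi: "es ! ?b \<inter> es ! i2 \<noteq> {}" using idx[of "q + (n - 1)"] idx[of q] Vb q unfolding Ed_def by auto
    show ?thesis
    proof (cases "?a = j")
      case False
      then show ?thesis using a1 ai idxC by blast
    next
      case True
      then have "?b \<noteq> j" using ab by simp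
      then show ?thesis using b1 bi idxC by blast
    qed
  qed
  show ?thesis using cyc finC Csub cardC evn six jC allc ex2 ex3 by simp
qed

definition nr :: "(nat \<times> nat) option \<Rightarrow> nat" where
  "nr r = (case r of None \<Rightarrow> 0 | Some (k, l) \<Rightarrow> 2 * k - 2)"

lemma adj_forb:
  assumes simple: "simple_edge_list es" and i: "i < length es" "i \<noteq> j" "col i = Some c'"
    and adj: "es ! i \<inter> es ! j \<noteq> {}"
  shows "c' \<in> forbidden_colors es col j"
proof -
  obtain a b where ab: "a \<noteq> b" "es ! i = {a, b}" using simple_edge[OF simple i(1)] by blast
  obtain x where x: "x \<in> es ! i" "x \<in> es ! j" using adj by blast
  obtain y where y: "es ! i = {x, y}"
  proof (cases "x = a")
    case True then show ?thesis using that ab by simp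
  next
    case False then have "x = b" using x ab by simp
    then show ?thesis using that[of a] ab by (simp add: insert_commute)
  qed
  show ?thesis unfolding forbidden_colors_def mem_Collect_eq
    apply (rule exI[where x=i])
    using i y x(2) by blast
qed

lemma card_col_upd:
  assumes "j < length es" "col j = None"
  shows "card {i. i < length es \<and> (col(j := Some c)) i \<noteq> None} = card {i. i < length es \<and> col i \<noteq> None} + 1"
proof -
  have "{i. i < length es \<and> (col(j := Some c)) i \<noteq> None} = insert j {i. i < length es \<and> col i \<noteq> None}"
    using assms by auto
  moreover have "j \<notin> {i. i < length es \<and> col i \<noteq> None}" using assms by simp
  ultimately show ?thesis by simp
qed

lemma step:
  assumes simple: "simple_edge_list es" and pr: "proper es col"
    and ex: "\<exists>j<length es. col j = None" and f1: "1 \<le> f" and fK: "2 * (max_degree es - 1) + f \<le> K"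
    and rl: "\<forall>c j X. X \<noteq> {} \<longrightarrow> rule c j X \<in> X"
    and ps: "proc_step es K rule enum col f = (col', r)"
  shows "proper es col' \<and>
    card {i. i < length es \<and> col' i \<noteq> None} + nr r = card {i. i < length es \<and> col i \<noteq> None} + 1 \<and>
    (r = None \<or> (\<exists>C. is_cycle es C \<and> even (card C) \<and> 6 \<le> card C \<and> nr r = card C - 2))"
proof -
  let ?m = "length es"
  define j where "j = (LEAST j. j < ?m \<and> col j = None)"
  have jp: "j < ?m \<and> col j = None" unfolding j_def using LeastI_ex[OF ex] .
  define S where "S = {1..K} - forbidden_colors es col j"
  define c where "c = sorted_list_of_set S ! (f - 1)"
  define col1 where "col1 = col(j := Some c)"
  define B where "B = bichrom_cycles es col1 j"
  have fb: "finite (forbidden_colors es col j) \<and> card (forbidden_colors es col j) \<le> 2 * (max_degree es - 1)"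
    using forb_bound[OF simple pr] jp by blast
  have "K - card (forbidden_colors es col j) \<le> card S"
    unfolding S_def using diff_card_le_card_Diff[of "forbidden_colors es col j" "{1..K}"] fb by simp
  then have "f \<le> card S" using conjunct2[OF fb] fK by linarith
  then have "f - 1 < length (sorted_list_of_set S)" using f1 by simp
  then have "c \<in> set (sorted_list_of_set S)" unfolding c_def by simp
  then have cS: "c \<in> S" unfolding S_def by simp
  then have nf: "c \<notin> forbidden_colors es col j" unfolding S_def by simp
  have pr1: "proper es col1"
    unfolding proper_def
  proof (intro allI impI)
    fix i1 i2 assume h: "i1 < ?m" "i2 < ?m" "i1 \<noteq> i2" "es ! i1 \<inter> es ! i2 \<noteq> {}" "col1 i1 \<noteq> None"
    show "col1 i1 \<noteq> col1 i2"
    proof (cases "i1 = j")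
      case True
      then have "i2 \<noteq> j" using h by simp
      have "col i2 \<noteq> Some c"
      proof
        assume "col i2 = Some c"
        then have "c \<in> forbidden_colors es col j" using adj_forb[OF simple h(2) \<open>i2 \<noteq> j\<close>] h(4) True by blast
        then show False using nf by simp
      qed
      then show ?thesis using True \<open>i2 \<noteq> j\<close> unfolding col1_def by simp
    next
      case False
      note F = False
      show ?thesis
      proof (cases "i2 = j")
        case True
        have "col i1 \<noteq> Some c"
        proof
          assume "col i1 = Some c"
          then have "c \<in> forbidden_colors es col j" using adj_forb[OF simple h(1) F] h(4) True by blast
          then show False using nf by simp
        qed
        then show ?thesis using True F unfolding col1_def by simp
      next
        case False
        then show ?thesis using F h pr unfolding proper_def col1_def by simp
      qed
    qed
  qed
  have same: "\<forall>i. i \<noteq> j \<longrightarrow> col1 i = col i" unfolding col1_def by simp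
  have c1j: "col1 j = Some c" unfolding col1_def by simp
  have cnt1: "card {i. i < ?m \<and> col1 i \<noteq> None} = card {i. i < ?m \<and> col i \<noteq> None} + 1"
    unfolding col1_def by (rule card_col_upd[of j es col c, OF conjunct1[OF jp] conjunct2[OF jp]])
  define C where "C = rule col1 j B"
  define k where "k = card C div 2"
  define i2 where "i2 = Min {i\<in>C. i \<noteq> j \<and> es ! i \<inter> es ! j \<noteq> {}}"
  define i3 where "i3 = Min {i\<in>C. i \<noteq> j \<and> i \<noteq> i2 \<and> es ! i \<inter> es ! i2 \<noteq> {}}"
  define col2 where "col2 = (\<lambda>i. if i \<in> C \<and> i \<noteq> i2 \<and> i \<noteq> i3 then None else col1 i)"
  have PS: "proc_step es K rule enum col f = (if B = {} then (col1, None) else (col2, Some (k, enum j k C)))"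
    unfolding proc_step_def Let_def col2_def i3_def i2_def k_def C_def B_def col1_def c_def S_def j_def ..
  show ?thesis
  proof (cases "B = {}")
    case True
    have "proc_step es K rule enum col f = (col1, None)" using PS True by simp
    then have "col' = col1" "r = None" using ps by simp_all
    then show ?thesis using pr1 cnt1 by (simp add: nr_def)
  next
    case False
    have CB: "C \<in> B" unfolding C_def using rl False by blast
    have cp: "is_cycle es C \<and> finite C \<and> C \<subseteq> {..<?m} \<and> even (card C) \<and> 6 \<le> card C \<and> j \<in> C \<and>
      (\<forall>i\<in>C. col1 i \<noteq> None) \<and> (\<exists>i\<in>C. i \<noteq> j \<and> es ! i \<inter> es ! j \<noteq> {}) \<and>
      (\<forall>i2\<in>C. \<exists>i\<in>C. i \<noteq> j \<and> i \<noteq> i2 \<and> es ! i \<inter> es ! i2 \<noteq> {})"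
      using cycle_props[OF simple pr1 CB[unfolded B_def] c1j nf same] .
    have "proc_step es K rule enum col f = (col2, Some (k, enum j k C))" using PS False by simp
    then have eq: "col' = col2" "r = Some (k, enum j k C)" using ps by simp_all
    have finC: "finite C" using cp by blast
    have i2C: "i2 \<in> C \<and> i2 \<noteq> j"
    proof -
      have "{i\<in>C. i \<noteq> j \<and> es ! i \<inter> es ! j \<noteq> {}} \<noteq> {}" using cp by blast
      then have "i2 \<in> {i\<in>C. i \<noteq> j \<and> es ! i \<inter> es ! j \<noteq> {}}" unfolding i2_def using finC by (intro Min_in) auto
      then show ?thesis by simp
    qed
    have i3C: "i3 \<in> C \<and> i3 \<noteq> i2"
    proof -
      have "{i\<in>C. i \<noteq> j \<and> i \<noteq> i2 \<and> es ! i \<inter> es ! i2 \<noteq> {}} \<noteq> {}" using cp i2C by blast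
      then have "i3 \<in> {i\<in>C. i \<noteq> j \<and> i \<noteq> i2 \<and> es ! i \<inter> es ! i2 \<noteq> {}}" unfolding i3_def using finC by (intro Min_in) auto
      then show ?thesis by simp
    qed
    have pr2: "proper es col2"
      unfolding proper_def
    proof (intro allI impI)
      fix a b assume h: "a < ?m" "b < ?m" "a \<noteq> b" "es ! a \<inter> es ! b \<noteq> {}" "col2 a \<noteq> None"
      then have "col2 a = col1 a" unfolding col2_def by (auto split: if_splits)
      then have "col1 a \<noteq> col1 b" using pr1 h unfolding proper_def by auto
      then show "col2 a \<noteq> col2 b" using \<open>col2 a = col1 a\<close> h(5) unfolding col2_def by auto
    qed
    define D where "D = C - {i2, i3}"
    have col2set: "{i. i < ?m \<and> col2 i \<noteq> None} = {i. i < ?m \<and> col1 i \<noteq> None} - D"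
      unfolding col2_def D_def by auto
    have Dsub: "D \<subseteq> {i. i < ?m \<and> col1 i \<noteq> None}" unfolding D_def using cp by auto
    have cardD: "card D = card C - 2"
    proof -
      have "{i2, i3} \<subseteq> C" using i2C i3C by simp
      then have "card D = card C - card {i2, i3}" unfolding D_def using finC by (simp add: card_Diff_subset finite_subset)
      moreover have "card {i2, i3} = 2" using i3C by simp
      ultimately show ?thesis by simp
    qed
    have "card {i. i < ?m \<and> col2 i \<noteq> None} = card {i. i < ?m \<and> col1 i \<noteq> None} - card D"
      unfolding col2set using Dsub by (simp add: card_Diff_subset finite_subset)
    moreover have "card D \<le> card {i. i < ?m \<and> col1 i \<noteq> None}" using Dsub by (simp add: card_mono)
    moreover have "nr r = card C - 2" unfolding eq nr_def k_def using cp by auto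
    ultimately show ?thesis using eq pr2 cnt1 cardD cp by auto
  qed
qed

definition Inv :: "'a set list \<Rightarrow> coloring \<Rightarrow> (nat \<times> nat) option list \<Rightarrow> bool" where
  "Inv es col R \<longleftrightarrow> proper es col \<and>
     sum_list (map nr R) + card {i. i < length es \<and> col i \<noteq> None} = length R \<and>
     (\<forall>q\<le>length R. sum_list (take q (map nr R)) \<le> q) \<and>
     (\<forall>x\<in>set (map nr R). x = 0 \<or> (\<exists>C. is_cycle es C \<and> even (card C) \<and> 6 \<le> card C \<and> x = card C - 2))"

lemma run_inv:
  assumes simple: "simple_edge_list es" and rl: "\<forall>c j X. X \<noteq> {} \<longrightarrow> rule c j X \<in> X"
    and Fb: "\<forall>f\<in>set F. 1 \<le> f \<and> 2 * (max_degree es - 1) + f \<le> K"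
    and run: "run_procedure es K rule enum F = (col, R)"
  shows "Inv es col R \<and> (length R = length F \<or> (\<forall>j<length es. col j \<noteq> None))"
  using Fb run
proof (induction F arbitrary: col R rule: rev_induct)
  case Nil
  then have "col = (\<lambda>_. None)" "R = []" unfolding run_procedure_def by auto
  then show ?case unfolding Inv_def proper_def by simp
next
  case (snoc f F)
  obtain col0 R0 where r0: "run_procedure es K rule enum F = (col0, R0)" by (cases "run_procedure es K rule enum F") auto
  have IH: "Inv es col0 R0 \<and> (length R0 = length F \<or> (\<forall>j<length es. col0 j \<noteq> None))"
    using snoc.IH[OF _ r0] snoc.prems(1) by simp
  have f: "1 \<le> f \<and> 2 * (max_degree es - 1) + f \<le> K" using snoc.prems(1) by simp
  have unf: "run_procedure es K rule enum (F @ [f]) =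
     (if (\<exists>j<length es. col0 j = None)
      then (case proc_step es K rule enum col0 f of (col', r) \<Rightarrow> (col', R0 @ [r]))
      else (col0, R0))"
    using r0 unfolding run_procedure_def by simp
  show ?case
  proof (cases "\<exists>j<length es. col0 j = None")
    case True
    obtain col' r where p: "proc_step es K rule enum col0 f = (col', r)" by (cases "proc_step es K rule enum col0 f") auto
    have res: "col = col'" "R = R0 @ [r]" using unf True p snoc.prems(2) by simp_all
    have I0: "Inv es col0 R0" using IH by simp
    have len: "length R0 = length F" using IH True by auto
    have st: "proper es col' \<and>
      card {i. i < length es \<and> col' i \<noteq> None} + nr r = card {i. i < length es \<and> col0 i \<noteq> None} + 1 \<and>
      (r = None \<or> (\<exists>C. is_cycle es C \<and> even (card C) \<and> 6 \<le> card C \<and> nr r = card C - 2))"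
      using step[OF simple _ True _ _ rl p] I0 f unfolding Inv_def by blast
    have sumeq: "sum_list (map nr (R0 @ [r])) + card {i. i < length es \<and> col' i \<noteq> None} = length (R0 @ [r])"
      using st I0 unfolding Inv_def by simp
    have pre: "\<forall>q\<le>length (R0 @ [r]). sum_list (take q (map nr (R0 @ [r]))) \<le> q"
    proof (intro allI impI)
      fix q assume q: "q \<le> length (R0 @ [r])"
      show "sum_list (take q (map nr (R0 @ [r]))) \<le> q"
      proof (cases "q \<le> length R0")
        case True
        then show ?thesis using I0 unfolding Inv_def by simp
      next
        case False
        then have "q = length (R0 @ [r])" using q by simp
        then show ?thesis using sumeq by simp
      qed
    qed
    have cyc: "\<forall>x\<in>set (map nr (R0 @ [r])). x = 0 \<or> (\<exists>C. is_cycle es C \<and> even (card C) \<and> 6 \<le> card C \<and> x = card C - 2)"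
      using I0 st unfolding Inv_def by (auto simp: nr_def)
    show ?thesis using st sumeq pre cyc res len unfolding Inv_def by simp
  next
    case False
    then have "run_procedure es K rule enum (F @ [f]) = (col0, R0)" using unf by (simp only: if_False)
    then have "col = col0" "R = R0" using snoc.prems(2) by simp_all
    then show ?thesis using IH False by auto
  qed
qed

lemma record_word_eq: "record_word R = wordn (map nr R)"
  by (induction R) (auto simp: record_word_def nr_def split: option.splits)

theorem lemma4:
  fixes es :: "'a set list" and \<gamma> :: real and K t :: nat and F :: "nat list"
    and rule :: "coloring \<Rightarrow> nat \<Rightarrow> nat set set \<Rightarrow> nat set"
    and enum :: "nat \<Rightarrow> nat \<Rightarrow> nat set \<Rightarrow> nat"
    and col :: coloring and R :: "(nat \<times> nat) option list"
  assumes "simple_edge_list es"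
    and "\<gamma> > 1"
    and "K = nat \<lceil>(2 + \<gamma>) * (real (max_degree es) - 1)\<rceil>"
    and "t > 0" and "length F = t"
    and "\<forall>f\<in>set F. 1 \<le> f \<and> f \<le> nat \<lceil>\<gamma> * (real (max_degree es) - 1)\<rceil>"
    and "\<forall>c j X. X \<noteq> {} \<longrightarrow> rule c j X \<in> X"
    and "\<forall>e k. inj_on (enum e k) {C. is_cycle es C \<and> e \<in> C \<and> card C = 2 * k}"
    and "run_procedure es K rule enum F = (col, R)"
    and "\<exists>j<length es. col j = None"
  shows "partial_dyck (record_word R)
    \<and> count_list (record_word R) 0 = t
    \<and> int (count_list (record_word R) 1) = int t - int (card {i. i < length es \<and> col i \<noteq> None})
    \<and> (\<forall>a b. is_descent (record_word R) a b \<longrightarrow> even (b - a))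
    \<and> (\<forall>g::nat. g \<ge> 1 \<and> (\<forall>C. is_cycle es C \<longrightarrow> card C \<ge> 2 * g + 1) \<longrightarrow>
         (\<forall>a b. is_descent (record_word R) a b \<longrightarrow> b - a \<ge> max 4 (2 * g)))"
proof -
  note simple = assms(1)
  define D where "D = max_degree es"
  define N where "N = nat \<lceil>\<gamma> * (real D - 1)\<rceil>"
  obtain f0 where f0: "f0 \<in> set F" using assms(4,5) by (cases F) auto
  have "1 \<le> f0 \<and> f0 \<le> N" using assms(6) f0 unfolding N_def D_def by blast
  then have "\<lceil>\<gamma> * (real D - 1)\<rceil> \<ge> 1" unfolding N_def by linarith
  then have "\<gamma> * (real D - 1) > 0" by linarith
  then have "real D - 1 > 0" using assms(2) by (simp add: zero_less_mult_iff)
  then have D2: "D \<ge> 2" by linarith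
  have eqr: "(2 + \<gamma>) * (real D - 1) = \<gamma> * (real D - 1) + of_int (int (2 * (D - 1)))"
    using D2 by (simp add: algebra_simps of_nat_diff)
  have "\<lceil>(2 + \<gamma>) * (real D - 1)\<rceil> = \<lceil>\<gamma> * (real D - 1)\<rceil> + int (2 * (D - 1))"
    by (subst eqr) (rule ceiling_add_of_int)
  then have KN: "K = N + 2 * (D - 1)" using assms(3) \<open>\<lceil>\<gamma> * (real D - 1)\<rceil> \<ge> 1\<close>
    unfolding N_def D_def[symmetric] by (simp add: nat_add_distrib)
  have Fb: "\<forall>f\<in>set F. 1 \<le> f \<and> 2 * (max_degree es - 1) + f \<le> K"
    using assms(6) KN unfolding N_def D_def by auto
  have ri: "Inv es col R \<and> (length R = length F \<or> (\<forall>j<length es. col j \<noteq> None))"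
    using run_inv[OF simple assms(7) Fb assms(9)] .
  have I: "Inv es col R" and lenR: "length R = t" using ri assms(10) assms(5) by auto
  let ?ns = "map nr R"
  have W: "record_word R = wordn ?ns" by (rule record_word_eq)
  have sumeq: "sum_list ?ns + card {i. i < length es \<and> col i \<noteq> None} = t"
    using I lenR unfolding Inv_def by simp
  have dy: "partial_dyck (record_word R)"
    unfolding partial_dyck_def W using wordn_set wordn_dyck I unfolding Inv_def by simp
  have c0: "count_list (record_word R) 0 = t" unfolding W wordn_count0 using lenR by simp
  have c1: "int (count_list (record_word R) 1) = int t - int (card {i. i < length es \<and> col i \<noteq> None})"
    unfolding W using wordn_count1[of ?ns] sumeq by simp
  have desc: "\<exists>C. is_cycle es C \<and> even (card C) \<and> 6 \<le> card C \<and> b - a = card C - 2"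
    if "is_descent (record_word R) a b" for a b
  proof -
    have "is_descent (wordn ?ns) a b" using that W by simp
    then have "b - a \<in> set ?ns" by (rule wordn_descent)
    moreover have "b - a \<noteq> 0" using that unfolding is_descent_def by simp
    moreover have "\<forall>x\<in>set ?ns. x = 0 \<or> (\<exists>C. is_cycle es C \<and> even (card C) \<and> 6 \<le> card C \<and> x = card C - 2)"
      using I unfolding Inv_def by (elim conjE)
    ultimately show ?thesis by (metis (no_types, lifting))
  qed
  have ev: "\<forall>a b. is_descent (record_word R) a b \<longrightarrow> even (b - a)"
  proof (intro allI impI)
    fix a b assume d: "is_descent (record_word R) a b"
    obtain C where "is_cycle es C" "even (card C)" "6 \<le> card C" "b - a = card C - 2" using desc[OF d] by blast
    then show "even (b - a)" by simp
  qed
  have gg: "\<forall>g::nat. g \<ge> 1 \<and> (\<forall>C. is_cycle es C \<longrightarrow> card C \<ge> 2 * g + 1) \<longrightarrow>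
         (\<forall>a b. is_descent (record_word R) a b \<longrightarrow> b - a \<ge> max 4 (2 * g))"
  proof (intro allI impI)
    fix g :: nat and a b
    assume g: "g \<ge> 1 \<and> (\<forall>C. is_cycle es C \<longrightarrow> card C \<ge> 2 * g + 1)" and d: "is_descent (record_word R) a b"
    obtain C where C: "is_cycle es C" "even (card C)" "6 \<le> card C" "b - a = card C - 2" using desc[OF d] by blast
    have "card C \<ge> 2 * g + 1" using g C(1) by blast
    then have "card C \<ge> 2 * g + 2" using C(2) by presburger
    then show "b - a \<ge> max 4 (2 * g)" using C(3,4) by (simp add: max_def; linarith)
  qed
  show ?thesis using dy c0 c1 ev gg by blast
qed

end
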